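(* Let $n\in\mathbb N$, $n\ge 2$, let $t\in[a,b]$ and let $f_j:[a,b]\to\mathbb F$, $j=1,\dots,n$, be $g$-differentiable at $t$. Then the product $\prod_{j=1}^n f_j$ is $g$-differentiable at $t$ and \[\Big(\prod_{j=1}^nf_j\Big)_g'(t)=\sum_{k=0}^{n-1}(\Delta g(t^* ))^k\Big(\sum_{\sigma\in F_{n,k+1}}\prod_{j=1}^n(f_j)^{(\sigma_j)}_g(t^* )\Big),\] where the factor $(\Delta g(t^* ))^0$ is interpreted as $1$.
   Context: Let $g:\mathbb R\to\mathbb R$ be nondecreasing and left-continuous, and $\mathbb F\in\{\mathbb R,\mathbb C\}$. For $t\in\mathbb R$ let $\Delta g(t)=g(t^+)-g(t)$, where $g(t^+)$ is the right-hand limit. Let $D_g=\{t\in\mathbb R:\Delta g(t)>0\}$ and $C_g=\{t\in\mathbb R: g \text{ is constant on }(t-\varepsilon,t+\varepsilon)\text{ for some }\varepsilon>0\}$; $C_g$ is open and is uniquely written as a countable union of pairwise disjoint open intervals $C_g=\bigcup_{n\in\Lambda}(a_n,b_n)$ (its connected components). Let $N_g^-=\{a_n:n\in\Lambda\}\setminus D_g$, $N_g^+=\{b_n:n\in\Lambda\}\setminus D_g$, $N_g=N_g^-\cup N_g^+$. Fix $a<b$ with $a\notin N_g^-$ and $b\notin D_g\cup C_g\cup N_g^+$. For $t\in[a,b]$ put $t^*=t$ if $t\notin C_g$ and $t^*=b_n$ if $t\in(a_n,b_n)$. The $g$-derivative of $f:[a,b]\to\mathbb F$ at $t\in[a,b]$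 is $f'_g(t)=\lim_{s\to t}\frac{f(s)-f(t)}{g(s)-g(t)}$ if $t\notin D_g\cup C_g$, and $f'_g(t)=\lim_{s\to t^{*+}}\frac{f(s)-f(t^* )}{g(s)-g(t^* )}$ if $t\in D_g\cup C_g$, provided the (finite) limit exists, in which case $f$ is called $g$-differentiable at $t$; the limits are over $s\in[a,b]$ with $g(s)$ different from the value in the denominator, and at points of $N_g^+\cup\{a\}$ only the right-hand limit is taken while at points of $N_g^-\cup\{b\}$ only the left-hand limit is taken. Notation: $f^{(0)}_g=f$, $f^{(1)}_g=f'_g$; for $\sigma=(\sigma_1,\dots,\sigma_n)\in\{0,1\}^n$, $|\sigma|$ is the number of indices $j$ with $\sigma_j=1$, and $F_{n,k}=\{\sigma\in\{0,1\}^n:|\sigma|=k\}$. *)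

theory Defs
  imports "HOL-Analysis.Analysis"
begin

text \<open>Stieltjes (g-)derivatives. Here g :: real => real is the derivator,
  [a,b] the working interval; functions f are considered on [a,b] only
  (all limits are taken within [a,b]).\<close>

definition gplus :: "(real \<Rightarrow> real) \<Rightarrow> real \<Rightarrow> real" where
  "gplus g t = Lim (at_right t) g"

definition Delta_g :: "(real \<Rightarrow> real) \<Rightarrow> real \<Rightarrow> real" where
  "Delta_g g t = gplus g t - g t"

definition Dg :: "(real \<Rightarrow> real) \<Rightarrow> real set" where
  "Dg g = {t. Delta_g g t > 0}"

definition Cg :: "(real \<Rightarrow> real) \<Rightarrow> real set" where
  "Cg g = {t. \<exists>e>0. \<forall>s\<in>{t-e<..<t+e}. g s = g t}"

text \<open>Left endpoints a_n (resp. right endpoints b_n) of the connected components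
  (a_n,b_n) of C_g, minus D_g.\<close>
definition Ngm :: "(real \<Rightarrow> real) \<Rightarrow> real set" where
  "Ngm g = {x. x \<notin> Cg g \<and> (\<exists>y>x. {x<..<y} \<subseteq> Cg g)} - Dg g"

definition Ngp :: "(real \<Rightarrow> real) \<Rightarrow> real set" where
  "Ngp g = {y. y \<notin> Cg g \<and> (\<exists>x<y. {x<..<y} \<subseteq> Cg g)} - Dg g"

text \<open>t* : t itself if t is not in C_g, otherwise the right endpoint of the
  component of C_g containing t.\<close>
definition tstar :: "(real \<Rightarrow> real) \<Rightarrow> real \<Rightarrow> real" where
  "tstar g t = (if t \<in> Cg g then Inf {s. t \<le> s \<and> s \<notin> Cg g} else t)"

definition has_g_deriv ::
  "(real \<Rightarrow> real) \<Rightarrow> real \<Rightarrow> real \<Rightarrow> (real \<Rightarrow> 'a::real_normed_field) \<Rightarrow> 'a \<Rightarrow> real \<Rightarrow> bool" where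
  "has_g_deriv g a b f L t =
    (if t \<in> Dg g \<union> Cg g then
       ((\<lambda>s. (f s - f (tstar g t)) / of_real (g s - g (tstar g t))) \<longlongrightarrow> L)
         (at (tstar g t) within ({s\<in>{a..b}. g s \<noteq> g (tstar g t)} \<inter> {tstar g t<..}))
     else
       ((\<lambda>s. (f s - f t) / of_real (g s - g t)) \<longlongrightarrow> L)
         (at t within ({s\<in>{a..b}. g s \<noteq> g t} \<inter>
            (if t \<in> Ngp g \<union> {a} then {t<..}
             else if t \<in> Ngm g \<union> {b} then {..<t} else UNIV))))"

definition g_differentiable ::
  "(real \<Rightarrow> real) \<Rightarrow> real \<Rightarrow> real \<Rightarrow> (real \<Rightarrow> 'a::real_normed_field) \<Rightarrow> real \<Rightarrow> bool" where
  "g_differentiable g a b f t = (\<exists>L. has_g_deriv g a b f L t)"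

definition g_deriv ::
  "(real \<Rightarrow> real) \<Rightarrow> real \<Rightarrow> real \<Rightarrow> (real \<Rightarrow> 'a::real_normed_field) \<Rightarrow> real \<Rightarrow> 'a" where
  "g_deriv g a b f t = (THE L. has_g_deriv g a b f L t)"

definition g_deriv_n ::
  "(real \<Rightarrow> real) \<Rightarrow> real \<Rightarrow> real \<Rightarrow> (real \<Rightarrow> 'a::real_normed_field) \<Rightarrow> nat \<Rightarrow> real \<Rightarrow> 'a" where
  "g_deriv_n g a b f i = (if i = 0 then f else g_deriv g a b f)"

definition Fnk :: "nat \<Rightarrow> nat \<Rightarrow> (nat \<Rightarrow> nat) set" where
  "Fnk n k = {\<sigma> \<in> {1..n} \<rightarrow>\<^sub>E {0,1}. card {j\<in>{1..n}. \<sigma> j = 1} = k}"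

end

theory Submission
  imports Defs
begin

lemma mono_right_lim:
  assumes "mono g"
  shows "(g \<longlongrightarrow> gplus g p) (at_right p)" "gplus g p \<ge> g p"
proof -
  have m: "\<And>x y. x \<le> y \<Longrightarrow> g x \<le> g y" using assms by (simp add: mono_def)
  have "(g \<longlongrightarrow> Inf (g ` ({p<..} \<inter> UNIV))) (at p within ({p<..} \<inter> UNIV))"
    by (rule Lim_right_bound[where K="g p"]) (auto intro: m)
  hence *: "(g \<longlongrightarrow> Inf (g ` {p<..})) (at_right p)" by simp
  hence "gplus g p = Inf (g ` {p<..})" unfolding gplus_def
    by (intro tendsto_Lim) auto
  with * show "(g \<longlongrightarrow> gplus g p) (at_right p)" by simp
  have "Inf (g ` {p<..}) \<ge> g p"
    by (rule cINF_greatest) (auto intro: m)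
  with \<open>gplus g p = _\<close> show "gplus g p \<ge> g p" by simp
qed

lemma gplus_const:
  assumes "e > 0" "\<forall>s\<in>{p<..<p+e}. g s = c"
  shows "gplus g p = c"
proof -
  have "eventually (\<lambda>s. g s = c) (at_right p)"
    unfolding eventually_at_right[of p, OF less_add_same_cancel1[THEN iffD2, OF \<open>e>0\<close>]]
    using assms by (intro exI[of _ "p+e"]) auto
  hence "(g \<longlongrightarrow> c) (at_right p)" by (rule tendsto_eventually)
  thus ?thesis unfolding gplus_def by (intro tendsto_Lim) auto
qed

lemma const_Cg: assumes "\<forall>s\<in>{x<..<y}. g s = c" shows "{x<..<y} \<subseteq> Cg g"
proof
  fix s assume s: "s \<in> {x<..<y}"
  define r where "r = min (s - x) (y-s)"
  have "r > 0" using s by (auto simp: r_def)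
  moreover have "\<forall>u\<in>{s-r<..<s+r}. g u = g s"
  proof
    fix u assume "u \<in> {s-r<..<s+r}"
    hence "u \<in> {x<..<y}" using s by (auto simp: r_def min_def split: if_splits)
    thus "g u = g s" using assms s by metis
  qed
  ultimately show "s \<in> Cg g" unfolding Cg_def by blast
qed

lemma Cg_open: "open (Cg g)"
proof (rule Topological_Spaces.openI)
  fix t assume "t \<in> Cg g"
  then obtain e where e: "e > 0" "\<forall>s\<in>{t-e<..<t+e}. g s = g t" unfolding Cg_def by auto
  have "{t-e<..<t+e} \<subseteq> Cg g" using e(2) by (rule const_Cg)
  thus "\<exists>T. open T \<and> t \<in> T \<and> T \<subseteq> Cg g" using e by (intro exI[of _ "{t-e<..<t+e}"]) auto
qed

lemma Cg_const:
  assumes "{x<..<y} \<subseteq> Cg g" "u \<in> {x<..<y}" "v \<in> {x<..<y}"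
  shows "g u = g v"
proof (rule connected_local_const[of "{x<..<y}" u v g])
  show "connected {x<..<y}" by simp
  show "\<forall>p\<in>{x<..<y}. eventually (\<lambda>q. g p = g q) (at p within {x<..<y})"
  proof
    fix p assume "p \<in> {x<..<y}"
    then obtain e where e: "e > 0" "\<forall>s\<in>{p-e<..<p+e}. g s = g p" using assms unfolding Cg_def by blast
    have "eventually (\<lambda>q. dist q p < e) (at p within {x<..<y})"
      using e(1) by (auto simp: eventually_at)
    thus "eventually (\<lambda>q. g p = g q) (at p within {x<..<y})"
    proof eventually_elim
      case (elim q)
      hence "q \<in> {p-e<..<p+e}" by (simp add: dist_real_def abs_less_iff)
      thus ?case using e(2) by metis
    qed
  qed
qed (use assms in auto)


definition "Rp g p \<longleftrightarrow> (\<forall>e>0. \<exists>s. p<s \<and> s<p+e \<and> g s \<noteq> g p)"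
definition "Lp g p \<longleftrightarrow> (\<forall>e>0. \<exists>s. p-e<s \<and> s<p \<and> g s \<noteq> g p)"

lemma notR_const: "\<not> Rp g p \<Longrightarrow> \<exists>e>0. \<forall>s\<in>{p<..<p+e}. g s = g p"
  by (auto simp: Rp_def)
lemma notL_const: "\<not> Lp g p \<Longrightarrow> \<exists>e>0. \<forall>s\<in>{p-e<..<p}. g s = g p"
  by (auto simp: Lp_def)

lemma notC_RL: assumes "p \<notin> Cg g" shows "Rp g p \<or> Lp g p"
proof (rule ccontr)
  assume "\<not> (Rp g p \<or> Lp g p)"
  then obtain e1 e2 where e: "e1>0" "\<forall>s\<in>{p<..<p+e1}. g s = g p" "e2>0" "\<forall>s\<in>{p-e2<..<p}. g s = g p"
    using notR_const notL_const by metis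
  have "\<forall>s\<in>{p - min e1 e2<..<p + min e1 e2}. g s = g p"
  proof
    fix s assume s: "s \<in> {p - min e1 e2<..<p + min e1 e2}"
    consider "s < p" | "s = p" | "s > p" by linarith
    thus "g s = g p" using e s by cases auto
  qed
  moreover have "min e1 e2 > 0" using e by simp
  ultimately have "p \<in> Cg g" unfolding Cg_def by blast
  with assms show False by simp
qed

lemma D_R: assumes "p \<in> Dg g" shows "Rp g p"
proof (rule ccontr)
  assume "\<not> Rp g p"
  then obtain e where "e>0" "\<forall>s\<in>{p<..<p+e}. g s = g p" using notR_const by metis
  hence "gplus g p = g p" by (rule gplus_const)
  with assms show False by (simp add: Dg_def Delta_g_def)
qed

lemma Ngp_R:
  assumes lc: "\<And>x. continuous (at_left x) g" and p: "p \<notin> Cg g" "x < p" "{x<..<p} \<subseteq> Cg g"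
  shows "Rp g p"
proof (rule ccontr)
  assume "\<not> Rp g p"
  then obtain e where e: "e>0" "\<forall>s\<in>{p<..<p+e}. g s = g p" using notR_const by metis
  define c where "c = g ((x+p)/2)"
  have cc: "\<forall>s\<in>{x<..<p}. g s = c"
  proof
    fix s assume s: "s \<in> {x<..<p}"
    have "(x+p)/2 \<in> {x<..<p}" using p(2) by simp
    thus "g s = c" unfolding c_def using Cg_const[OF p(3) s] by blast
  qed
  have "(g \<longlongrightarrow> g p) (at_left p)" using lc[of p] by (simp add: continuous_within)
  moreover have "eventually (\<lambda>s. g s = c) (at_left p)"
    unfolding eventually_at_left[OF p(2)] using cc by (intro exI[of _ x]) (auto simp: p(2))
  hence "(g \<longlongrightarrow> c) (at_left p)" by (rule tendsto_eventually)
  ultimately have "c = g p" using tendsto_unique trivial_limit_at_left_real by blast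
  have "\<forall>s\<in>{p - min e (p-x)<..<p + min e (p-x)}. g s = g p"
  proof
    fix s assume s: "s \<in> {p - min e (p-x)<..<p + min e (p-x)}"
    consider "s < p" | "s = p" | "s > p" by linarith
    thus "g s = g p" using e s cc \<open>c = g p\<close> by cases auto
  qed
  moreover have "min e (p-x) > 0" using e p by simp
  ultimately have "p \<in> Cg g" unfolding Cg_def by blast
  with p show False by simp
qed

lemma Ngm_L:
  assumes mono: "mono g" and p: "p \<notin> Cg g" "p \<notin> Dg g" "p < y" "{p<..<y} \<subseteq> Cg g"
  shows "Lp g p"
proof (rule ccontr)
  assume "\<not> Lp g p"
  then obtain e where e: "e>0" "\<forall>s\<in>{p-e<..<p}. g s = g p" using notL_const by metis
  define c where "c = g ((y+p)/2)"
  have cc: "\<forall>s\<in>{p<..<y}. g s = c"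
  proof
    fix s assume s: "s \<in> {p<..<y}"
    have "(y+p)/2 \<in> {p<..<y}" using p(3) by simp
    thus "g s = c" unfolding c_def using Cg_const[OF p(4) s] by blast
  qed
  have "gplus g p = c" using cc p(3) by (intro gplus_const[of "y-p"]) auto
  moreover have "gplus g p \<ge> g p" using mono_right_lim[OF mono] by blast
  ultimately have "c = g p" using p(2) by (simp add: Dg_def Delta_g_def)
  have "\<forall>s\<in>{p - min e (y-p)<..<p + min e (y-p)}. g s = g p"
  proof
    fix s assume s: "s \<in> {p - min e (y-p)<..<p + min e (y-p)}"
    consider "s < p" | "s = p" | "s > p" by linarith
    thus "g s = g p" using e s cc \<open>c = g p\<close> by cases auto
  qed
  moreover have "min e (y-p) > 0" using e p by simp
  ultimately have "p \<in> Cg g" unfolding Cg_def by blast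
  with p show False by simp
qed

lemma tstar_Cg:
  assumes t: "t \<in> Cg g" "t \<le> b" "b \<notin> Cg g"
  shows "t < tstar g t" "tstar g t \<le> b" "tstar g t \<notin> Cg g" "{t<..<tstar g t} \<subseteq> Cg g"
proof -
  define S where "S = {s. t \<le> s \<and> s \<notin> Cg g}"
  have ts: "tstar g t = Inf S" using t by (simp add: tstar_def S_def)
  have S: "S = {t..} \<inter> - Cg g" by (auto simp: S_def)
  have cl: "closed S" unfolding S using Cg_open by (intro closed_Int) auto
  have bS: "b \<in> S" using t by (simp add: S_def)
  have bdd: "bdd_below S" by (auto simp: S_def bdd_below_def)
  have IS: "Inf S \<in> S" using closed_contains_Inf[OF _ bdd cl] bS by blast
  show "tstar g t \<le> b" unfolding ts using bS bdd by (intro cInf_lower)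
  show "tstar g t \<notin> Cg g" using IS ts by (simp add: S_def)
  moreover have "t \<le> tstar g t" using IS ts by (simp add: S_def)
  ultimately show "t < tstar g t" using t(1) by (cases "t = tstar g t") auto
  show "{t<..<tstar g t} \<subseteq> Cg g"
  proof
    fix s assume s: "s \<in> {t<..<tstar g t}"
    show "s \<in> Cg g"
    proof (rule ccontr)
      assume "s \<notin> Cg g"
      hence "s \<in> S" using s by (simp add: S_def)
      hence "Inf S \<le> s" using bdd by (intro cInf_lower)
      thus False using s ts by simp
    qed
  qed
qed


definition Fil :: "(real \<Rightarrow> real) \<Rightarrow> real \<Rightarrow> real \<Rightarrow> real \<Rightarrow> real filter" where
  "Fil g a b t = (if t \<in> Dg g \<union> Cg g then
       at (tstar g t) within ({s\<in>{a..b}. g s \<noteq> g (tstar g t)} \<inter> {tstar g t<..})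
     else at t within ({s\<in>{a..b}. g s \<noteq> g t} \<inter>
            (if t \<in> Ngp g \<union> {a} then {t<..}
             else if t \<in> Ngm g \<union> {b} then {..<t} else UNIV)))"

lemma tstar_notC: "t \<notin> Cg g \<Longrightarrow> tstar g t = t"
  by (simp add: tstar_def)

lemma has_g_deriv_Fil:
  "has_g_deriv g a b f L t =
     ((\<lambda>s. (f s - f (tstar g t)) / of_real (g s - g (tstar g t))) \<longlongrightarrow> L) (Fil g a b t)"
proof (cases "t \<in> Dg g \<union> Cg g")
  case True
  show ?thesis unfolding has_g_deriv_def Fil_def if_P[OF True] by (rule refl)
next
  case False
  hence "tstar g t = t" by (intro tstar_notC) auto
  thus ?thesis unfolding has_g_deriv_def Fil_def if_not_P[OF False] by simp
qed

lemma islimpt_right: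
  fixes g :: "real \<Rightarrow> real" and a b p :: real
  assumes "a \<le> p" "p < b" "Rp g p"
  shows "p islimpt ({s\<in>{a..b}. g s \<noteq> g p} \<inter> {p<..})"
proof (rule islimpt_approachable[THEN iffD2], intro allI impI)
  fix e :: real assume "e > 0"
  have pos: "min e (b-p) > 0" using \<open>e>0\<close> assms by simp
  obtain s where s: "p < s" "s < p + min e (b-p)" "g s \<noteq> g p"
    using assms(3)[unfolded Rp_def, rule_format, OF pos] by blast
  thus "\<exists>x'\<in>{s \<in> {a..b}. g s \<noteq> g p} \<inter> {p<..}. x' \<noteq> p \<and> dist x' p < e"
    using assms by (intro bexI[of _ s]) (auto simp: dist_real_def)
qed

lemma islimpt_left:
  fixes g :: "real \<Rightarrow> real" and a b p :: real
  assumes "a < p" "p \<le> b" "Lp g p"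
  shows "p islimpt ({s\<in>{a..b}. g s \<noteq> g p} \<inter> {..<p})"
proof (rule islimpt_approachable[THEN iffD2], intro allI impI)
  fix e :: real assume "e > 0"
  have pos: "min e (p-a) > 0" using \<open>e>0\<close> assms by simp
  obtain s where s: "p - min e (p-a) < s" "s < p" "g s \<noteq> g p"
    using assms(3)[unfolded Lp_def, rule_format, OF pos] by blast
  thus "\<exists>x'\<in>{s \<in> {a..b}. g s \<noteq> g p} \<inter> {..<p}. x' \<noteq> p \<and> dist x' p < e"
    using assms by (intro bexI[of _ s]) (auto simp: dist_real_def)
qed

lemma Fil_facts:
  fixes g :: "real \<Rightarrow> real"
  assumes g_mono: "mono g"
    and g_leftcont: "\<And>x. continuous (at_left x) g"
    and ab: "a < b"
    and a_ok: "a \<notin> Ngm g"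
    and b_ok: "b \<notin> Dg g \<union> Cg g \<union> Ngp g"
    and t_in: "t \<in> {a..b}"
  shows "tstar g (tstar g t) = tstar g t"
    and "Fil g a b (tstar g t) = Fil g a b t"
    and "Fil g a b t \<noteq> bot"
    and "((\<lambda>s. g s - g (tstar g t)) \<longlongrightarrow> Delta_g g (tstar g t)) (Fil g a b t)"
    and "eventually (\<lambda>s. g s \<noteq> g (tstar g t)) (Fil g a b t)"
proof -
  define T where "T = tstar g t"
  have Cfacts: "t < T \<and> T \<le> b \<and> T \<notin> Cg g \<and> {t<..<T} \<subseteq> Cg g" if "t \<in> Cg g"
    using tstar_Cg[of t g b] that t_in b_ok unfolding T_def by auto
  have TnC: "T \<notin> Cg g"
    using Cfacts tstar_notC[of t g] unfolding T_def by (cases "t \<in> Cg g") auto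
  show "tstar g (tstar g t) = tstar g t" using TnC unfolding T_def by (simp add: tstar_notC)
  show "Fil g a b (tstar g t) = Fil g a b t"
  proof (cases "t \<in> Cg g")
    case False thus ?thesis by (simp add: tstar_notC)
  next
    case True
    note C = Cfacts[OF True]
    show ?thesis
    proof (cases "T \<in> Dg g")
      case True
      thus ?thesis using \<open>t \<in> Cg g\<close> TnC
        by (simp add: Fil_def tstar_notC T_def[symmetric])
    next
      case False
      have "T \<in> Ngp g" unfolding Ngp_def using C False by auto
      thus ?thesis using \<open>t \<in> Cg g\<close> TnC False
        by (simp add: Fil_def tstar_notC T_def[symmetric])
    qed
  qed
  show "eventually (\<lambda>s. g s \<noteq> g (tstar g t)) (Fil g a b t)"
    unfolding Fil_def by (auto simp: eventually_at_filter tstar_notC)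
  show "Fil g a b t \<noteq> bot"
  proof (cases "t \<in> Dg g \<union> Cg g")
    case DC: True
    have "a \<le> T \<and> T < b \<and> Rp g T"
    proof (cases "t \<in> Cg g")
      case True
      note C = Cfacts[OF True]
      have "T \<noteq> b"
      proof
        assume "T = b"
        hence "b \<in> Ngp g \<or> b \<in> Dg g" unfolding Ngp_def using C by auto
        thus False using b_ok by auto
      qed
      moreover have "Rp g T"
      proof (cases "T \<in> Dg g")
        case True thus ?thesis by (rule D_R)
      next
        case False thus ?thesis using Ngp_R[OF g_leftcont, of T t] C by auto
      qed
      ultimately show ?thesis using C t_in by auto
    next
      case False
      hence "t \<in> Dg g" "T = t" using DC by (auto simp: T_def tstar_notC)
      thus ?thesis using t_in b_ok D_R[of t g] by (cases "t = b") auto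
    qed
    hence "T islimpt ({s\<in>{a..b}. g s \<noteq> g T} \<inter> {T<..})" by (intro islimpt_right) auto
    thus ?thesis using DC unfolding Fil_def T_def by (simp add: trivial_limit_within)
  next
    case nDC: False
    hence tD: "t \<notin> Dg g" "t \<notin> Cg g" by auto
    show ?thesis
    proof (cases "t \<in> Ngp g \<union> {a}")
      case True
      have "t < b" using True b_ok t_in ab by (cases "t = b") auto
      moreover have "Rp g t"
      proof (cases "t \<in> Ngp g")
        case True
        then obtain x where "x < t" "{x<..<t} \<subseteq> Cg g" unfolding Ngp_def by auto
        thus ?thesis using Ngp_R[OF g_leftcont, of t x] tD by auto
      next
        case False
        hence ta: "t = a" using True by auto
        show ?thesis
        proof (rule ccontr)
          assume "\<not> Rp g t"
          then obtain e where "e > 0" "\<forall>s\<in>{t<..<t+e}. g s = g t" using notR_const by metis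
          hence "{t<..<t+e} \<subseteq> Cg g" by (intro const_Cg)
          hence "a \<in> Ngm g" unfolding Ngm_def using tD ta \<open>e>0\<close>
            by (auto intro!: exI[of _ "t+e"])
          thus False using a_ok by simp
        qed
      qed
      ultimately have "t islimpt ({s\<in>{a..b}. g s \<noteq> g t} \<inter> {t<..})"
        using t_in by (intro islimpt_right) auto
      thus ?thesis using nDC True unfolding Fil_def by (simp add: trivial_limit_within)
    next
      case nP: False
      show ?thesis
      proof (cases "t \<in> Ngm g \<union> {b}")
        case True
        have "a < t" using nP t_in by (cases "t = a") auto
        moreover have "Lp g t"
        proof (cases "t \<in> Ngm g")
          case True
          then obtain y where "t < y" "{t<..<y} \<subseteq> Cg g" unfolding Ngm_def by auto
          thus ?thesis using Ngm_L[OF g_mono, of t y] tD by auto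
        next
          case False
          hence tb: "t = b" using True by auto
          show ?thesis
          proof (rule ccontr)
            assume "\<not> Lp g t"
            then obtain e where "e > 0" "\<forall>s\<in>{t-e<..<t}. g s = g t" using notL_const by metis
            hence "{t-e<..<t} \<subseteq> Cg g" by (intro const_Cg)
            hence "b \<in> Ngp g" unfolding Ngp_def using tD tb \<open>e>0\<close>
              by (auto intro!: exI[of _ "t-e"])
            thus False using b_ok by simp
          qed
        qed
        ultimately have "t islimpt ({s\<in>{a..b}. g s \<noteq> g t} \<inter> {..<t})"
          using t_in by (intro islimpt_left) auto
        thus ?thesis using nDC nP True unfolding Fil_def by (simp add: trivial_limit_within)
      next
        case nM: False
        have "a < t" "t < b" using nP nM t_in by (cases "t = a"; cases "t = b"; auto)+
        have "t islimpt ({s\<in>{a..b}. g s \<noteq> g t} \<inter> UNIV)"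
        proof (cases "Rp g t")
          case True
          hence "t islimpt ({s\<in>{a..b}. g s \<noteq> g t} \<inter> {t<..})"
            using \<open>a<t\<close> \<open>t<b\<close> by (intro islimpt_right) auto
          thus ?thesis by (rule islimpt_subset) auto
        next
          case False
          hence "Lp g t" using notC_RL tD by blast
          hence "t islimpt ({s\<in>{a..b}. g s \<noteq> g t} \<inter> {..<t})"
            using \<open>a<t\<close> \<open>t<b\<close> by (intro islimpt_left) auto
          thus ?thesis by (rule islimpt_subset) auto
        qed
        thus ?thesis using nDC nP nM unfolding Fil_def by (simp add: trivial_limit_within)
      qed
    qed
  qed
  show "((\<lambda>s. g s - g (tstar g t)) \<longlongrightarrow> Delta_g g (tstar g t)) (Fil g a b t)"
  proof (cases "t \<in> Dg g \<union> Cg g")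
    case True
    have "(g \<longlongrightarrow> gplus g T) (at T within {T<..})" using mono_right_lim[OF g_mono] by blast
    hence "(g \<longlongrightarrow> gplus g T) (at T within ({s\<in>{a..b}. g s \<noteq> g T} \<inter> {T<..}))"
      by (rule tendsto_within_subset) auto
    hence "((\<lambda>s. g s - g T) \<longlongrightarrow> gplus g T - g T) (at T within ({s\<in>{a..b}. g s \<noteq> g T} \<inter> {T<..}))"
      by (intro tendsto_diff tendsto_const)
    thus ?thesis using True unfolding Fil_def T_def Delta_g_def by simp
  next
    case False
    hence tD: "t \<notin> Dg g" "t \<notin> Cg g" by auto
    have "gplus g t \<ge> g t" using mono_right_lim[OF g_mono] by blast
    hence D0: "Delta_g g t = 0" using tD by (simp add: Dg_def Delta_g_def)
    hence "gplus g t = g t" by (simp add: Delta_g_def)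
    hence r: "(g \<longlongrightarrow> g t) (at_right t)" using mono_right_lim[OF g_mono, of t] by simp
    have l: "(g \<longlongrightarrow> g t) (at_left t)" using g_leftcont[of t] by (simp add: continuous_within)
    have "(g \<longlongrightarrow> g t) (at t)" using filterlim_split_at[OF l r] .
    hence "\<And>X. (g \<longlongrightarrow> g t) (at t within X)" by (metis tendsto_within_subset subset_UNIV)
    hence "(g \<longlongrightarrow> g t) (Fil g a b t)" unfolding Fil_def using False by simp
    hence "((\<lambda>s. g s - g t) \<longlongrightarrow> g t - g t) (Fil g a b t)" by (intro tendsto_diff tendsto_const)
    thus ?thesis using D0 tD by (simp add: tstar_notC)
  qed
qed


lemma prod_expand:
  fixes c x :: "nat \<Rightarrow> 'a::field" and d :: 'a
  assumes fin: "finite A" and d: "d \<noteq> 0"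
  shows "((\<Prod>j\<in>A. c j + x j * d) - (\<Prod>j\<in>A. c j)) / d =
    (\<Sum>S\<in>Pow A - {{}}. d^(card S - 1) * (\<Prod>j\<in>S. x j) * (\<Prod>j\<in>A-S. c j))"
proof -
  have "(\<Prod>j\<in>A. c j + x j * d) = (\<Prod>j\<in>A. x j * d + c j)" by (simp add: add.commute)
  also have "\<dots> = (\<Sum>S\<in>Pow A. (\<Prod>j\<in>S. x j * d) * (\<Prod>j\<in>A-S. c j))"
    by (rule prod_add[OF fin])
  also have "\<dots> = (\<Prod>j\<in>A. c j) + (\<Sum>S\<in>Pow A - {{}}. (\<Prod>j\<in>S. x j * d) * (\<Prod>j\<in>A-S. c j))"
    using fin by (subst sum.remove[of _ "{}"]) auto
  finally have *: "(\<Prod>j\<in>A. c j + x j * d) - (\<Prod>j\<in>A. c j) =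
     (\<Sum>S\<in>Pow A - {{}}. (\<Prod>j\<in>S. x j * d) * (\<Prod>j\<in>A-S. c j))" by simp
  have **: "(\<Prod>j\<in>S. x j * d) * (\<Prod>j\<in>A-S. c j) / d = d^(card S - 1) * (\<Prod>j\<in>S. x j) * (\<Prod>j\<in>A-S. c j)"
    if S: "S \<in> Pow A - {{}}" for S
  proof -
    have "finite S" using S fin finite_subset by auto
    hence "card S \<ge> 1" using S by (auto simp: Suc_le_eq card_gt_0_iff)
    hence "d ^ card S = d * d^(card S - 1)" by (metis Suc_diff_le diff_Suc_1 power_Suc)
    thus ?thesis using d by (simp add: prod.distrib field_simps)
  qed
  show ?thesis unfolding * sum_divide_distrib using ** by (rule sum.cong[OF refl])
qed

lemma prod_quot_lim:
  fixes f :: "nat \<Rightarrow> 'b \<Rightarrow> 'a::real_normed_field" and c L :: "nat \<Rightarrow> 'a" and D :: "'b \<Rightarrow> real"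
  assumes fin: "finite A"
    and q: "\<And>j. j \<in> A \<Longrightarrow> ((\<lambda>s. (f j s - c j) / of_real (D s)) \<longlongrightarrow> L j) F"
    and D: "(D \<longlongrightarrow> \<Delta>) F"
    and ev: "eventually (\<lambda>s. D s \<noteq> 0) F"
  shows "((\<lambda>s. ((\<Prod>j\<in>A. f j s) - (\<Prod>j\<in>A. c j)) / of_real (D s)) \<longlongrightarrow>
     (\<Sum>S\<in>Pow A - {{}}. of_real \<Delta> ^ (card S - 1) * (\<Prod>j\<in>S. L j) * (\<Prod>j\<in>A-S. c j))) F"
proof -
  define qq where "qq j s = (f j s - c j) / of_real (D s)" for j s
  have "((\<lambda>s. \<Sum>S\<in>Pow A - {{}}. of_real (D s) ^ (card S - 1) * (\<Prod>j\<in>S. qq j s) * (\<Prod>j\<in>A-S. c j)) \<longlongrightarrow>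
     (\<Sum>S\<in>Pow A - {{}}. of_real \<Delta> ^ (card S - 1) * (\<Prod>j\<in>S. L j) * (\<Prod>j\<in>A-S. c j))) F"
  proof (intro tendsto_sum tendsto_mult tendsto_power tendsto_of_real D tendsto_const tendsto_prod)
    fix S j assume "S \<in> Pow A - {{}}" "j \<in> S"
    thus "((qq j) \<longlongrightarrow> L j) F" unfolding qq_def using q by auto
  qed
  moreover have "eventually (\<lambda>s. (\<Sum>S\<in>Pow A - {{}}. of_real (D s) ^ (card S - 1) * (\<Prod>j\<in>S. qq j s) * (\<Prod>j\<in>A-S. c j))
      = ((\<Prod>j\<in>A. f j s) - (\<Prod>j\<in>A. c j)) / of_real (D s)) F"
    using ev
  proof eventually_elim
    case (elim s)
    hence d: "(of_real (D s) :: 'a) \<noteq> 0" by simp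
    have "f j s = c j + qq j s * of_real (D s)" for j
      unfolding qq_def using d by (simp add: field_simps)
    hence "(\<Prod>j\<in>A. f j s) = (\<Prod>j\<in>A. c j + qq j s * of_real (D s))" by simp
    thus ?case using prod_expand[OF fin d, of c "\<lambda>j. qq j s"] by simp
  qed
  ultimately show ?thesis by (rule Lim_transform_eventually)
qed

lemma comb_identity:
  fixes h :: "nat \<Rightarrow> nat \<Rightarrow> 'a::comm_ring_1" and \<Delta> :: 'a
  shows "(\<Sum>k=0..<n. \<Delta>^k * (\<Sum>\<sigma>\<in>Fnk n (k+1). \<Prod>j=1..n. h j (\<sigma> j))) =
    (\<Sum>S\<in>Pow {1..n} - {{}}. \<Delta>^(card S - 1) * (\<Prod>j\<in>S. h j 1) * (\<Prod>j\<in>{1..n}-S. h j 0))"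
proof -
  define A where "A = {1..n}"
  have finA: "finite A" and cA: "card A = n" by (auto simp: A_def)
  define Q where "Q S = (\<Prod>j\<in>S. h j 1) * (\<Prod>j\<in>A-S. h j 0)" for S
  have img: "(\<lambda>S. card S - 1) ` (Pow A - {{}}) \<subseteq> {0..<n}"
  proof
    fix k assume "k \<in> (\<lambda>S. card S - 1) ` (Pow A - {{}})"
    then obtain S where S: "S \<subseteq> A" "S \<noteq> {}" "k = card S - 1" by auto
    have "card S \<le> n" using card_mono[OF finA S(1)] cA by simp
    moreover have "card S \<ge> 1" using S finA by (meson card_0_eq finite_subset less_one not_le)
    ultimately show "k \<in> {0..<n}" using S by simp
  qed
  have "(\<Sum>S\<in>Pow A - {{}}. \<Delta>^(card S - 1) * Q S) =
     (\<Sum>k=0..<n. \<Sum>S\<in>{S \<in> Pow A - {{}}. card S - 1 = k}. \<Delta>^(card S - 1) * Q S)"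
    by (rule sum.group[symmetric, OF _ _ img]) (use finA in auto)
  also have "\<dots> = (\<Sum>k=0..<n. \<Delta>^k * (\<Sum>\<sigma>\<in>Fnk n (k+1). \<Prod>j=1..n. h j (\<sigma> j)))"
  proof (rule sum.cong[OF refl])
    fix k assume "k \<in> {0..<n}"
    have set: "{S \<in> Pow A - {{}}. card S - 1 = k} = {S. S \<subseteq> A \<and> card S = k+1}"
    proof (intro set_eqI iffI)
      fix S assume "S \<in> {S \<in> Pow A - {{}}. card S - 1 = k}"
      hence "S \<subseteq> A" "S \<noteq> {}" "card S - 1 = k" by auto
      moreover have "card S \<noteq> 0" using calculation finA by (meson card_0_eq finite_subset)
      ultimately show "S \<in> {S. S \<subseteq> A \<and> card S = k+1}" by auto
    next
      fix S assume "S \<in> {S. S \<subseteq> A \<and> card S = k+1}"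
      thus "S \<in> {S \<in> Pow A - {{}}. card S - 1 = k}" by auto
    qed
    have "(\<Sum>\<sigma>\<in>Fnk n (k+1). \<Prod>j=1..n. h j (\<sigma> j)) = (\<Sum>S\<in>{S. S \<subseteq> A \<and> card S = k+1}. Q S)"
    proof (rule sum.reindex_bij_witness[where j = "\<lambda>\<sigma>. {x\<in>A. \<sigma> x = 1}"
          and i = "\<lambda>S x. if x \<in> A then (if x \<in> S then 1 else 0) else undefined"])
      fix \<sigma> assume s: "\<sigma> \<in> Fnk n (k+1)"
      hence pi: "\<sigma> \<in> A \<rightarrow>\<^sub>E {0,1}" and cs: "card {x\<in>A. \<sigma> x = 1} = k+1"
        by (auto simp: Fnk_def A_def)
      show "(\<lambda>x. if x \<in> A then (if x \<in> {x\<in>A. \<sigma> x = 1} then 1 else 0) else undefined) = \<sigma>"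
      proof
        fix x show "(if x \<in> A then (if x \<in> {x\<in>A. \<sigma> x = 1} then 1 else 0) else undefined) = \<sigma> x"
          using pi by (cases "x \<in> A") (auto simp: PiE_def extensional_def)
      qed
      show "{x\<in>A. \<sigma> x = 1} \<in> {S. S \<subseteq> A \<and> card S = k+1}" using cs by auto
      have "(\<Prod>j=1..n. h j (\<sigma> j)) = (\<Prod>j\<in>A. h j (\<sigma> j))" by (simp add: A_def)
      also have "\<dots> = (\<Prod>j\<in>{x\<in>A. \<sigma> x = 1}. h j (\<sigma> j)) * (\<Prod>j\<in>A - {x\<in>A. \<sigma> x = 1}. h j (\<sigma> j))"
        using finA by (subst prod.subset_diff[of "{x\<in>A. \<sigma> x = 1}"]) (auto simp: mult.commute)
      also have "\<dots> = Q {x\<in>A. \<sigma> x = 1}" unfolding Q_def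
      proof (intro arg_cong2[where f = "(*)"] prod.cong refl)
        fix j assume "j \<in> A - {x\<in>A. \<sigma> x = 1}"
        thus "h j (\<sigma> j) = h j 0" using pi by (auto simp: PiE_def Pi_def)
      qed auto
      finally show "Q {x\<in>A. \<sigma> x = 1} = (\<Prod>j=1..n. h j (\<sigma> j))" by simp
    next
      fix S assume S: "S \<in> {S. S \<subseteq> A \<and> card S = k+1}"
      show "{x\<in>A. (\<lambda>x. if x \<in> A then (if x \<in> S then 1 else 0) else undefined) x = (1::nat)} = S"
        using S by auto
      have "{x\<in>A. (if x \<in> A then (if x \<in> S then 1 else 0) else undefined) = (1::nat)} = S"
        using S by auto
      thus "(\<lambda>x. if x \<in> A then (if x \<in> S then 1 else 0) else undefined) \<in> Fnk n (k+1)"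
        using S unfolding Fnk_def A_def[symmetric] by (auto simp: PiE_def extensional_def)
    qed
    thus "(\<Sum>S\<in>{S \<in> Pow A - {{}}. card S - 1 = k}. \<Delta>^(card S - 1) * Q S) =
        \<Delta>^k * (\<Sum>\<sigma>\<in>Fnk n (k+1). \<Prod>j=1..n. h j (\<sigma> j))"
      unfolding set by (simp add: sum_distrib_left)
  qed
  finally show ?thesis unfolding Q_def A_def by (simp add: mult.assoc)
qed


theorem proposition2p7:
  fixes g :: "real \<Rightarrow> real" and a b t :: real and n :: nat
    and f :: "nat \<Rightarrow> real \<Rightarrow> 'a::real_normed_field"
  assumes g_mono: "mono g"
    and g_leftcont: "\<And>x. continuous (at_left x) g"
    and ab: "a < b"
    and a_ok: "a \<notin> Ngm g"
    and b_ok: "b \<notin> Dg g \<union> Cg g \<union> Ngp g"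
    and n2: "n \<ge> 2"
    and t_in: "t \<in> {a..b}"
    and diff: "\<And>j. j \<in> {1..n} \<Longrightarrow> g_differentiable g a b (f j) t"
  shows "g_differentiable g a b (\<lambda>s. \<Prod>j=1..n. f j s) t \<and>
         g_deriv g a b (\<lambda>s. \<Prod>j=1..n. f j s) t =
           (\<Sum>k=0..<n. (of_real (Delta_g g (tstar g t)))^k *
              (\<Sum>\<sigma>\<in>Fnk n (k+1). \<Prod>j=1..n. g_deriv_n g a b (f j) (\<sigma> j) (tstar g t)))"
proof -
  define T where "T = tstar g t"
  define A where "A = {1..n}"
  note FF = Fil_facts[OF g_mono g_leftcont ab a_ok b_ok t_in]
  have pred_eq: "has_g_deriv g a b h L T = has_g_deriv g a b h L t"
    for h :: "real \<Rightarrow> 'a" and L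
    unfolding T_def by (simp add: has_g_deriv_Fil FF(1) FF(2))
  have uniq: "L1 = L2" if "has_g_deriv g a b h L1 t" "has_g_deriv g a b h L2 t"
    for h :: "real \<Rightarrow> 'a" and L1 L2
    using that unfolding has_g_deriv_Fil using tendsto_unique FF(3) by blast
  define Lj where "Lj j = g_deriv g a b (f j) T" for j
  have hj: "has_g_deriv g a b (f j) (Lj j) t" if jA: "j \<in> A" for j
  proof -
    obtain L where L: "has_g_deriv g a b (f j) L t" using diff[of j] jA
      by (auto simp: A_def g_differentiable_def)
    have "Lj j = L" unfolding Lj_def g_deriv_def pred_eq
      by (rule the_equality[where P="\<lambda>L. has_g_deriv g a b (f j) L t", OF L]) (use uniq L in blast)
    thus ?thesis using L by simp
  qed
  define Q where "Q = (\<Sum>S\<in>Pow A - {{}}. of_real (Delta_g g T) ^ (card S - 1) * (\<Prod>j\<in>S. Lj j) * (\<Prod>j\<in>A-S. f j T))"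
  have lim: "has_g_deriv g a b (\<lambda>s. \<Prod>j=1..n. f j s) Q t"
    unfolding has_g_deriv_Fil Q_def T_def[symmetric] A_def[symmetric]
  proof (rule prod_quot_lim)
    show "finite A" by (simp add: A_def)
    fix j assume "j \<in> A"
    thus "((\<lambda>s. (f j s - f j T) / of_real (g s - g T)) \<longlongrightarrow> Lj j) (Fil g a b t)"
      using hj[of j] unfolding has_g_deriv_Fil T_def by simp
  next
    show "((\<lambda>s. g s - g T) \<longlongrightarrow> Delta_g g T) (Fil g a b t)" using FF(4) unfolding T_def .
    show "eventually (\<lambda>s. g s - g T \<noteq> 0) (Fil g a b t)" using FF(5) unfolding T_def
      by (rule eventually_mono) simp
  qed
  have gd: "g_deriv g a b (\<lambda>s. \<Prod>j=1..n. f j s) t = Q"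
    unfolding g_deriv_def by (rule the_equality[where P="\<lambda>L. has_g_deriv g a b (\<lambda>s. \<Prod>j=1..n. f j s) L t", OF lim]) (use uniq lim in blast)
  have "(\<Sum>k=0..<n. (of_real (Delta_g g T))^k *
              (\<Sum>\<sigma>\<in>Fnk n (k+1). \<Prod>j=1..n. g_deriv_n g a b (f j) (\<sigma> j) T)) =
     (\<Sum>S\<in>Pow {1..n} - {{}}. (of_real (Delta_g g T))^(card S - 1) *
        (\<Prod>j\<in>S. g_deriv_n g a b (f j) 1 T) * (\<Prod>j\<in>{1..n}-S. g_deriv_n g a b (f j) 0 T))"
    by (rule comb_identity)
  also have "\<dots> = Q" unfolding Q_def A_def Lj_def by (simp add: g_deriv_n_def)
  finally show ?thesis using gd lim unfolding g_differentiable_def T_def by auto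
qed

end
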